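(* In the mechanism $\mathcal{M}_{sCA}$, let $\mathbf{t}$ be the true types and $(A_1,\dots,A_n)$ a feasible allocation maximizing $\sum_i t_i(A_i)$. Let $\mathbf{d}$ be a separated profile of single-minded declarations $(S_j,t_j(S_j))$. If $\sum_{j\in R_i(\mathbf{d},A_i)}d_j(S_j)<\frac12 t_i(A_i)$, then any utility-maximizing undominated declaration $d_i$ for agent $i$ (against $\mathbf{d}_{-i}$) is a single-minded declaration for some set $S_i$ with $d_i(S_i)\ge\frac12 t_i(A_i)$.
   Context: $s$-CA problem: $n$ agents, items $M$; feasible allocations consist of pairwise disjoint sets each of size at most $s$. Agent $i$ has private monotone valuation $t_i$, $t_i(\emptyset)=0$. Single-minded declaration $(S,x)$: value $x$ on supersets of $S$, $0$ otherwise. Mechanism $\mathcal{M}_{sCA}$: (1) replace each declaration by $(S_i,d_i(S_i))$ with $S_i\in\arg\max_S d_i(S)$ (ties to smaller sets); (2) greedily, in decreasing order of declared value, tentatively allocate sets of size at most $s$ disjoint from previously allocated ones, giving $T_1,\dots,T_n$; (3) for each $i$ with $T_i\ne\emptyset$, if $d_i(T_i)\le\sum_{j\ne i:\,S_j\cap T_i\neq\emptyset}d_j(S_j)$ set $T_i=\emptyset$; (4) allocate $T_1,\dots,T_n$ and charge each winner his critical price (infimum value he could declare for his set and still win it). Utility = true value minus payment. Undominated strategies are the single-minded declarations $(S,t_i(S))$. Notation: $R_i(\mathbf{d},T)=\{j\ne i:S_j\cap T\ne\emptyset\}$, $Q_i(\mathbf{d},T)=\{j\in R_i(\mathbf{d},T):d_j(S_j)<t_i(T)\}$;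 $\mathbf{d}$ is separated if $\sum_{j\in Q_i(\mathbf{d},S_i)}d_j(S_j)\le d_i(S_i)$ for all $i$. *)

theory Defs
  imports Complex_Main "HOL-Library.Product_Lexorder"
begin

text \<open>Agents are 0,...,n-1; items form a finite set M.  A (single-minded)
declaration is a pair (S, x): value x on supersets of S, 0 otherwise.
A profile is D :: nat => 'm set * real.\<close>

definition sm_val :: "'m set \<times> real \<Rightarrow> 'm set \<Rightarrow> real" where
  "sm_val d T = (if fst d \<subseteq> T then snd d else 0)"

text \<open>Step (1): replace a declaration by (S_i, d_i(S_i)) with S_i a maximizer of d_i,
ties broken to smaller sets.  For a single-minded (S,x) with x > 0 this is (S,x);
otherwise the empty set is the (smallest) maximizer.\<close>
definition reduce :: "'m set \<times> real \<Rightarrow> 'm set \<times> real" where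
  "reduce d = (if 0 < snd d then d else ({}, sm_val d {}))"

fun greedy_aux :: "nat \<Rightarrow> (nat \<Rightarrow> 'm set) \<Rightarrow> nat list \<Rightarrow> 'm set \<Rightarrow> nat \<Rightarrow> 'm set" where
  "greedy_aux s S [] U = (\<lambda>j. {})"
| "greedy_aux s S (j # js) U =
     (if card (S j) \<le> s \<and> S j \<inter> U = {}
      then (greedy_aux s S js (U \<union> S j))(j := S j)
      else greedy_aux s S js U)"

definition greedy_order :: "nat \<Rightarrow> (nat \<Rightarrow> 'm set \<times> real) \<Rightarrow> nat list" where
  "greedy_order n D = sort_key (\<lambda>j. (- snd (reduce (D j)), j)) [0..<n]"

definition tentative :: "nat \<Rightarrow> nat \<Rightarrow> (nat \<Rightarrow> 'm set \<times> real) \<Rightarrow> nat \<Rightarrow> 'm set" where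
  "tentative n s D = greedy_aux s (\<lambda>j. fst (reduce (D j))) (greedy_order n D) {}"

definition wins :: "nat \<Rightarrow> nat \<Rightarrow> (nat \<Rightarrow> 'm set \<times> real) \<Rightarrow> nat \<Rightarrow> bool" where
  "wins n s D i \<longleftrightarrow>
     (let T = tentative n s D i in
      T \<noteq> {} \<and>
      \<not> (sm_val (reduce (D i)) T \<le>
          (\<Sum>j\<in>{j. j < n \<and> j \<noteq> i \<and> fst (reduce (D j)) \<inter> T \<noteq> {}}. snd (reduce (D j)))))"

definition alloc :: "nat \<Rightarrow> nat \<Rightarrow> (nat \<Rightarrow> 'm set \<times> real) \<Rightarrow> nat \<Rightarrow> 'm set" where
  "alloc n s D i = (if wins n s D i then fst (reduce (D i)) else {})"

definition crit_price :: "nat \<Rightarrow> nat \<Rightarrow> (nat \<Rightarrow> 'm set \<times> real) \<Rightarrow> nat \<Rightarrow> real" where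
  "crit_price n s D i = Inf {x. wins n s (D(i := (fst (reduce (D i)), x))) i}"

definition payment :: "nat \<Rightarrow> nat \<Rightarrow> (nat \<Rightarrow> 'm set \<times> real) \<Rightarrow> nat \<Rightarrow> real" where
  "payment n s D i = (if wins n s D i then crit_price n s D i else 0)"

definition utility :: "nat \<Rightarrow> nat \<Rightarrow> (nat \<Rightarrow> 'm set \<Rightarrow> real) \<Rightarrow> (nat \<Rightarrow> 'm set \<times> real) \<Rightarrow> nat \<Rightarrow> real" where
  "utility n s t D i = t i (alloc n s D i) - payment n s D i"

definition undominated :: "'m set \<Rightarrow> (nat \<Rightarrow> 'm set \<Rightarrow> real) \<Rightarrow> nat \<Rightarrow> ('m set \<times> real) set" where
  "undominated M t i = {(S, t i S) | S. S \<subseteq> M}"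

definition feasible :: "nat \<Rightarrow> nat \<Rightarrow> 'm set \<Rightarrow> (nat \<Rightarrow> 'm set) \<Rightarrow> bool" where
  "feasible n s M A \<longleftrightarrow> (\<forall>j<n. A j \<subseteq> M \<and> card (A j) \<le> s) \<and>
     (\<forall>j<n. \<forall>k<n. j \<noteq> k \<longrightarrow> A j \<inter> A k = {})"

definition valuation :: "'m set \<Rightarrow> ('m set \<Rightarrow> real) \<Rightarrow> bool" where
  "valuation M v \<longleftrightarrow> v {} = 0 \<and> (\<forall>S T. S \<subseteq> T \<and> T \<subseteq> M \<longrightarrow> v S \<le> v T)"

definition R_set :: "nat \<Rightarrow> (nat \<Rightarrow> 'm set \<times> real) \<Rightarrow> nat \<Rightarrow> 'm set \<Rightarrow> nat set" where
  "R_set n D i T = {j. j < n \<and> j \<noteq> i \<and> fst (D j) \<inter> T \<noteq> {}}"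

definition Q_set :: "nat \<Rightarrow> (nat \<Rightarrow> 'm set \<Rightarrow> real) \<Rightarrow> (nat \<Rightarrow> 'm set \<times> real) \<Rightarrow> nat \<Rightarrow> 'm set \<Rightarrow> nat set" where
  "Q_set n t D i T = {j \<in> R_set n D i T. snd (D j) < t i T}"

definition separated :: "nat \<Rightarrow> (nat \<Rightarrow> 'm set \<Rightarrow> real) \<Rightarrow> (nat \<Rightarrow> 'm set \<times> real) \<Rightarrow> bool" where
  "separated n t D \<longleftrightarrow> (\<forall>i<n. (\<Sum>j\<in>Q_set n t D i (fst (D i)). snd (D j)) \<le> snd (D i))"

end

theory Submission
  imports Defs
begin

lemma greedy_vals: "greedy_aux s S js U j = {} \<or> greedy_aux s S js U j = S j"
  by (induction js arbitrary: U) auto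

lemma greedy_get:
  "i \<in> set js \<Longrightarrow> card (S i) \<le> s \<Longrightarrow> S i \<inter> U = {}
   \<Longrightarrow> \<forall>j\<in>set (takeWhile (\<lambda>k. k \<noteq> i) js). S j \<inter> S i = {}
   \<Longrightarrow> greedy_aux s S js U i = S i"
proof (induction js arbitrary: U)
  case Nil then show ?case by simp
next
  case (Cons j js)
  show ?case
  proof (cases "j = i")
    case True then show ?thesis using Cons.prems by simp
  next
    case False
    then have h1: "S j \<inter> S i = {}" using Cons.prems(4) by simp
    have h2: "S i \<inter> (U \<union> S j) = {}" using Cons.prems(3) h1 by auto
    have h3: "i \<in> set js" using Cons.prems(1) False by simp
    have h4: "\<forall>j\<in>set (takeWhile (\<lambda>k. k \<noteq> i) js). S j \<inter> S i = {}"
      using Cons.prems(4) False by simp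
    have "greedy_aux s S js (U \<union> S j) i = S i" "greedy_aux s S js U i = S i"
      using Cons.IH[OF h3 Cons.prems(2) h2 h4] Cons.IH[OF h3 Cons.prems(2) Cons.prems(3) h4] by auto
    then show ?thesis using False by simp
  qed
qed

lemma sorted_prefix:
  "sorted (map f xs) \<Longrightarrow> i \<in> set xs \<Longrightarrow> j \<in> set (takeWhile (\<lambda>k. k \<noteq> i) xs) \<Longrightarrow> f j \<le> f i"
  by (induction xs) (auto split: if_splits)

lemma wins_pos:
  assumes "wins n s E i"
  shows "0 < snd (E i) \<and> reduce (E i) = E i"
proof -
  have "tentative n s E i \<noteq> {}" using assms by (simp add: wins_def Let_def)
  then have "fst (reduce (E i)) \<noteq> {}"
    using greedy_vals[of s "\<lambda>j. fst (reduce (E j))" "greedy_order n E" "{}" i]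
    unfolding tentative_def by auto
  then show ?thesis by (auto simp: reduce_def split: if_splits)
qed

lemma price_nonneg:
  assumes "wins n s E i"
  shows "0 \<le> crit_price n s E i"
proof -
  define X where "X = {x. wins n s (E(i := (fst (reduce (E i)), x))) i}"
  have r: "reduce (E i) = E i" using wins_pos[OF assms] by simp
  have "E(i := (fst (E i), snd (E i))) = E" by simp
  then have "snd (E i) \<in> X" using assms r unfolding X_def by simp
  moreover have "\<forall>x\<in>X. 0 \<le> x"
  proof
    fix x assume "x \<in> X"
    then have "wins n s (E(i := (fst (reduce (E i)), x))) i" unfolding X_def by simp
    from wins_pos[OF this] show "0 \<le> x" by simp
  qed
  ultimately have "0 \<le> Inf X" by (intro cInf_greatest) auto
  then show ?thesis unfolding crit_price_def X_def .
qed

theorem proposition4p5: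
  fixes n s :: nat and M :: "'m set" and t :: "nat \<Rightarrow> 'm set \<Rightarrow> real"
    and A :: "nat \<Rightarrow> 'm set" and D :: "nat \<Rightarrow> 'm set \<times> real"
    and i :: nat and di :: "'m set \<times> real"
  assumes "finite M"
    and "\<forall>j<n. valuation M (t j)"
    and "feasible n s M A"
    and "\<forall>B. feasible n s M B \<longrightarrow> (\<Sum>j<n. t j (B j)) \<le> (\<Sum>j<n. t j (A j))"
    and "\<forall>j<n. D j \<in> undominated M t j"
    and "separated n t D"
    and "i < n"
    and "(\<Sum>j\<in>R_set n D i (A i). snd (D j)) < t i (A i) / 2"
    and "di \<in> undominated M t i"
    and "\<forall>d' \<in> undominated M t i. utility n s t (D(i := d')) i \<le> utility n s t (D(i := di)) i"
  shows "\<exists>S. di = (S, t i S) \<and> t i S \<ge> t i (A i) / 2"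
proof -
  from assms(9) obtain S where di: "di = (S, t i S)" "S \<subseteq> M" by (auto simp: undominated_def)
  have Ai: "A i \<subseteq> M" "card (A i) \<le> s" using assms(3,7) by (auto simp: feasible_def)
  have val: "\<And>j T. j<n \<Longrightarrow> T \<subseteq> M \<Longrightarrow> 0 \<le> t j T"
    using assms(2) unfolding valuation_def by (metis empty_subsetI)
  have t0: "t i {} = 0" using assms(2,7) unfolding valuation_def by simp
  have Dj: "\<And>j. j<n \<Longrightarrow> fst (D j) \<subseteq> M \<and> snd (D j) = t j (fst (D j))"
    using assms(5) unfolding undominated_def by fastforce
  have Dnn: "\<And>j. j<n \<Longrightarrow> 0 \<le> snd (D j)" using Dj val by metis
  define \<sigma> where "\<sigma> = (\<Sum>j\<in>R_set n D i (A i). snd (D j))"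
  have finR: "finite (R_set n D i (A i))"
    by (rule finite_subset[of _ "{..<n}"]) (auto simp: R_set_def)
  have \<sigma>nn: "0 \<le> \<sigma>" unfolding \<sigma>_def by (rule sum_nonneg) (auto simp: R_set_def Dnn)
  have tA: "0 \<le> t i (A i)" using val assms(7) Ai by simp
  show ?thesis
  proof (cases "t i (A i) = 0")
    case True then show ?thesis using di val assms(7) by auto
  next
    case False
    then have tpos: "0 < t i (A i)" using tA by simp
    have sig: "\<sigma> < t i (A i) / 2" using assms(8) unfolding \<sigma>_def .
    have Ane: "A i \<noteq> {}" using False t0 by auto
    have redD: "\<And>j. fst (reduce (D j)) \<noteq> {} \<Longrightarrow> reduce (D j) = D j"
      by (auto simp: reduce_def split: if_splits)
    have small: "snd (D j) \<le> \<sigma>" if "j \<in> R_set n D i (A i)" for j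
      unfolding \<sigma>_def using that finR
      by (intro member_le_sum) (auto simp: R_set_def Dnn)
    have win: "wins n s (D(i := (A i, x))) i" if "\<sigma> < x" for x
    proof -
      define E where "E = D(i := (A i, x))"
      have xpos: "0 < x" using that \<sigma>nn by simp
      have rEi: "reduce (E i) = (A i, x)" using xpos by (simp add: E_def reduce_def)
      have rEj: "\<And>j. j \<noteq> i \<Longrightarrow> reduce (E j) = reduce (D j)" by (simp add: E_def)
      have tent: "tentative n s E i = A i"
        unfolding tentative_def
      proof (rule greedy_get[of i _ "\<lambda>j. fst (reduce (E j))" s, simplified rEi fst_conv])
        show "i \<in> set (greedy_order n E)" using assms(7) by (simp add: greedy_order_def)
        show "card (A i) \<le> s" by (rule Ai)
        show "A i \<inter> {} = {}" by simp
        show "\<forall>j\<in>set (takeWhile (\<lambda>k. k \<noteq> i) (greedy_order n E)). fst (reduce (E j)) \<inter> A i = {}"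
        proof
          fix j assume jin: "j \<in> set (takeWhile (\<lambda>k. k \<noteq> i) (greedy_order n E))"
          have ji: "j \<noteq> i" using set_takeWhileD[OF jin] by simp
          have "j \<in> set (greedy_order n E)" using jin by (meson set_takeWhileD)
          then have jn: "j < n" by (simp add: greedy_order_def)
          have key: "(- snd (reduce (E j)), j) \<le> (- snd (reduce (E i)), i)"
            using sorted_prefix[of "\<lambda>j. (- snd (reduce (E j)), j)" "greedy_order n E" i j]
              jin assms(7) unfolding greedy_order_def by (simp add: sorted_sort_key)
          show "fst (reduce (E j)) \<inter> A i = {}"
          proof (rule ccontr)
            assume c: "fst (reduce (E j)) \<inter> A i \<noteq> {}"
            then have rd: "reduce (D j) = D j" using redD rEj ji by fastforce
            then have "fst (D j) \<inter> A i \<noteq> {}" using c rEj ji by simp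
            then have "j \<in> R_set n D i (A i)" using jn ji by (simp add: R_set_def)
            then have "snd (D j) < x" using small that by fastforce
            moreover have "- snd (D j) \<le> - x" using key rEj[OF ji] rd rEi
              by (auto simp: less_eq_prod_def)
            ultimately show False by simp
          qed
        qed
      qed
      have sumle: "(\<Sum>j\<in>{j. j < n \<and> j \<noteq> i \<and> fst (reduce (E j)) \<inter> A i \<noteq> {}}. snd (reduce (E j))) \<le> \<sigma>"
      proof -
        have "(\<Sum>j\<in>{j. j < n \<and> j \<noteq> i \<and> fst (reduce (E j)) \<inter> A i \<noteq> {}}. snd (reduce (E j)))
            = (\<Sum>j\<in>{j. j < n \<and> j \<noteq> i \<and> fst (reduce (E j)) \<inter> A i \<noteq> {}}. snd (D j))"
        proof (rule sum.cong)
          fix j assume "j \<in> {j. j < n \<and> j \<noteq> i \<and> fst (reduce (E j)) \<inter> A i \<noteq> {}}"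
          then show "snd (reduce (E j)) = snd (D j)" using redD rEj by fastforce
        qed simp
        also have "\<dots> \<le> \<sigma>" unfolding \<sigma>_def
        proof (rule sum_mono2[OF finR])
          show "{j. j < n \<and> j \<noteq> i \<and> fst (reduce (E j)) \<inter> A i \<noteq> {}} \<subseteq> R_set n D i (A i)"
          proof
            fix j assume "j \<in> {j. j < n \<and> j \<noteq> i \<and> fst (reduce (E j)) \<inter> A i \<noteq> {}}"
            then show "j \<in> R_set n D i (A i)" using redD rEj by (fastforce simp: R_set_def)
          qed
          show "\<And>b. b \<in> R_set n D i (A i) - {j. j < n \<and> j \<noteq> i \<and> fst (reduce (E j)) \<inter> A i \<noteq> {}} \<Longrightarrow> 0 \<le> snd (D b)"
            by (auto simp: R_set_def Dnn)
        qed
        finally show ?thesis .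
      qed
      have "sm_val (reduce (E i)) (A i) = x" using rEi by (simp add: sm_val_def)
      then show ?thesis using tent sumle that Ane unfolding E_def[symmetric] wins_def Let_def
        by auto
    qed
    define E0 where "E0 = D(i := (A i, t i (A i)))"
    have w0: "wins n s E0 i" unfolding E0_def using win sig tpos by simp
    have rE0: "reduce (E0 i) = (A i, t i (A i))" using tpos by (simp add: E0_def reduce_def)
    define X where "X = {y. wins n s (D(i := (A i, y))) i}"
    have cp: "crit_price n s E0 i = Inf X"
      unfolding crit_price_def X_def rE0 by (simp add: E0_def)
    have bdd: "bdd_below X"
    proof (rule bdd_belowI)
      fix y assume "y \<in> X"
      then show "0 \<le> y" using wins_pos[of n s "D(i := (A i, y))" i] unfolding X_def by simp
    qed
    have pricele: "Inf X \<le> \<sigma>"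
    proof (rule ccontr)
      assume "\<not> Inf X \<le> \<sigma>"
      then have lt: "\<sigma> < Inf X" by simp
      define y where "y = (\<sigma> + Inf X) / 2"
      have "y \<in> X" using win lt unfolding X_def y_def by simp
      then have "Inf X \<le> y" using bdd by (rule cInf_lower)
      then show False using lt unfolding y_def by simp
    qed
    have u0: "utility n s t E0 i \<ge> t i (A i) - \<sigma>"
      using w0 rE0 cp pricele by (simp add: utility_def alloc_def payment_def)
    have "(A i, t i (A i)) \<in> undominated M t i" using Ai by (auto simp: undominated_def)
    then have ule: "utility n s t E0 i \<le> utility n s t (D(i := di)) i"
      using assms(10) unfolding E0_def by blast
    define E1 where "E1 = D(i := di)"
    have u1: "utility n s t E1 i \<le> max 0 (t i S)"
    proof (cases "wins n s E1 i")
      case True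
      have "reduce (E1 i) = E1 i" using wins_pos[OF True] by simp
      then have "alloc n s E1 i = S" using True di by (simp add: alloc_def E1_def)
      then show ?thesis using price_nonneg[OF True] True by (simp add: utility_def payment_def)
    next
      case False
      then show ?thesis using t0 by (simp add: utility_def payment_def alloc_def)
    qed
    have "t i (A i) / 2 < max 0 (t i S)" using u0 ule u1 sig unfolding E1_def by linarith
    then have "t i (A i) / 2 \<le> t i S" using tpos by (auto simp: max_def split: if_splits)
    then show ?thesis using di by auto
  qed
qed

end
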